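(* If $D \subset \mathbb{C}$ is a Bloch domain, i.e. $\sup_{z\in D}\sup\{r>0: \{w:|w-z|<r\}\subset D\}<+\infty$, then $\mathrm{b}(D) = \mathrm{b}_{\alpha}(D) = +\infty$ for all $\alpha > -1$.
   Context: $A^p_\alpha$ ($0<p<\infty$, $\alpha>-1$) is the weighted Bergman space on $\mathbb{D}$. $\mathrm{b}_\alpha(f)=\sup(\{0\}\cup\{p>0: f\in A^p_\alpha\})$, $\mathrm{b}(f)=\sup(\{0\}\cup\{p/(\alpha+2): p>0,\alpha>-1, f\in A^p_\alpha\})$, and for a domain $D$, $\mathrm{b}(D)$, $\mathrm{b}_\alpha(D)$ are the infima of $\mathrm{b}(f)$, $\mathrm{b}_\alpha(f)$ over holomorphic $f\colon\mathbb{D}\to D$. *)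

theory Defs
  imports "HOL-Complex_Analysis.Complex_Analysis"
begin

text \<open>Weighted Bergman space A^p_alpha on the unit disc (area measure = Lebesgue
  measure on complex; normalisation constants do not affect membership).\<close>
definition bergman_space :: "real \<Rightarrow> real \<Rightarrow> (complex \<Rightarrow> complex) set" where
  "bergman_space p \<alpha> =
     {f. f holomorphic_on ball 0 1 \<and>
         (\<integral>\<^sup>+ z\<in>ball 0 1. ennreal (cmod (f z) powr p * (1 - cmod z ^ 2) powr \<alpha>) \<partial>lborel) < \<infinity>}"

definition b_alpha :: "real \<Rightarrow> (complex \<Rightarrow> complex) \<Rightarrow> ereal" where
  "b_alpha \<alpha> f = Sup ({0} \<union> {ereal p | p. p > 0 \<and> f \<in> bergman_space p \<alpha>})"

definition b_fun :: "(complex \<Rightarrow> complex) \<Rightarrow> ereal" where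
  "b_fun f = Sup ({0} \<union> {ereal (p / (\<alpha> + 2)) | p \<alpha>. p > 0 \<and> \<alpha> > -1 \<and> f \<in> bergman_space p \<alpha>})"

definition maps_into :: "complex set \<Rightarrow> (complex \<Rightarrow> complex) set" where
  "maps_into D = {f. f holomorphic_on ball 0 1 \<and> f ` ball 0 1 \<subseteq> D}"

definition b_dom :: "complex set \<Rightarrow> ereal" where
  "b_dom D = (INF f\<in>maps_into D. b_fun f)"

definition b_alpha_dom :: "real \<Rightarrow> complex set \<Rightarrow> ereal" where
  "b_alpha_dom \<alpha> D = (INF f\<in>maps_into D. b_alpha \<alpha> f)"

definition bloch_domain :: "complex set \<Rightarrow> bool" where
  "bloch_domain D \<longleftrightarrow> open D \<and> connected D \<and> D \<noteq> {} \<and>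
     (SUP z\<in>D. Sup {ereal r | r. r > 0 \<and> ball z r \<subseteq> D}) < \<infinity>"

end

theory Submission imports Defs begin
lemma bloch_bound:
  assumes "bloch_domain D"
  obtains R where "R > 0" "\<And>z r. z \<in> D \<Longrightarrow> r > 0 \<Longrightarrow> ball z r \<subseteq> D \<Longrightarrow> r \<le> R"
proof -
  define S where "S = (SUP z\<in>D. Sup {ereal r | r. r > 0 \<and> ball z r \<subseteq> D})"
  have S: "S < \<infinity>" using assms unfolding bloch_domain_def S_def by auto
  have le: "ereal r \<le> S" if "z \<in> D" "r > 0" "ball z r \<subseteq> D" for z r
  proof -
    have "ereal r \<le> Sup {ereal r | r. r > 0 \<and> ball z r \<subseteq> D}"
      by (rule Sup_upper) (use that in auto)
    also have "\<dots> \<le> S" unfolding S_def by (rule SUP_upper) fact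
    finally show ?thesis .
  qed
  show ?thesis
  proof (rule that[of "max 1 (real_of_ereal S)"])
    fix z r assume h: "z \<in> D" "r > 0" "ball z r \<subseteq> D"
    have "ereal r \<le> S" by (rule le[OF h])
    with S have "r \<le> real_of_ereal S"
      by (cases S) auto
    then show "r \<le> max 1 (real_of_ereal S)" by simp
  qed simp
qed

lemma deriv_bound:
  assumes hol: "f holomorphic_on ball 0 1" and img: "f ` ball 0 1 \<subseteq> D"
    and R: "\<And>z r. z \<in> D \<Longrightarrow> r > 0 \<Longrightarrow> ball z r \<subseteq> D \<Longrightarrow> r \<le> R" and "R > 0"
    and z: "norm z < 1"
  shows "(1 - norm z) * norm (deriv f z) \<le> 12 * R"
proof -
  define \<rho> where "\<rho> = 1 - norm z"
  have \<rho>: "\<rho> > 0" using z by (simp add: \<rho>_def)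
  have sub: "ball z \<rho> \<subseteq> ball 0 1"
    using norm_triangle_ineq2[of _ z] by (auto simp: \<rho>_def dist_norm) (smt (verit, best) norm_minus_commute norm_triangle_ineq2)
  have hol': "f holomorphic_on ball z \<rho>" using holomorphic_on_subset[OF hol sub] .
  obtain b where b: "ball b (\<rho> * norm (deriv f z) / 12) \<subseteq> f ` ball z \<rho>"
    using Bloch[OF hol' \<rho> order_refl] by blast
  show ?thesis
  proof (cases "\<rho> * norm (deriv f z) / 12 > 0")
    case True
    have "ball b (\<rho> * norm (deriv f z) / 12) \<subseteq> D" using b sub img by blast
    moreover have "b \<in> D" using calculation True by auto
    ultimately have "\<rho> * norm (deriv f z) / 12 \<le> R" using R True by blast
    then show ?thesis by (simp add: \<rho>_def)
  next
    case False
    then show ?thesis using \<open>R > 0\<close> by (simp add: \<rho>_def)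
  qed
qed

lemma powr_neg_ge1:
  fixes x a :: real
  assumes "0 < x" "x \<le> 1" "0 \<le> a"
  shows "1 \<le> x powr (-a)"
proof -
  have "x powr a \<le> 1" using assms by (intro powr_le1) auto
  moreover have "x powr a > 0" using assms by simp
  ultimately show ?thesis by (simp add: powr_minus one_le_inverse)
qed

lemma growth:
  assumes hol: "f holomorphic_on ball 0 1"
    and bd: "\<And>z. norm z < 1 \<Longrightarrow> (1 - norm z) * norm (deriv f z) \<le> M"
    and "M \<ge> 0" and "\<delta> > 0" and z: "norm z < 1"
  shows "norm (f z) \<le> (norm (f 0) + M / \<delta>) * (1 - norm z) powr (-\<delta>)"
proof -
  define u where "u = norm z"
  have u: "0 \<le> u" "u < 1" using z by (auto simp: u_def)
  define g where "g = (\<lambda>t::real. f (of_real t * z))"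
  define \<phi> where "\<phi> = (\<lambda>t::real. (M / \<delta>) * (1 - t * u) powr (-\<delta>))"
  define \<phi>' where "\<phi>' = (\<lambda>t::real. M * u * (1 - t * u) powr (-\<delta> - 1))"
  have nrm: "norm (of_real t * z) = t * u" if "0 \<le> t" for t
    using that by (simp add: u_def norm_mult)
  have inball: "of_real t * z \<in> ball 0 1" if "0 \<le> t" "t \<le> 1" for t
  proof -
    have "t * u \<le> u" using that u by (simp add: mult_left_le_one_le)
    then show ?thesis using u nrm[OF that(1)] by simp
  qed
  have pos: "1 - t * u > 0" if "0 \<le> t" "t \<le> 1" for t
  proof -
    have "t * u \<le> u" using that u by (simp add: mult_left_le_one_le)
    then show ?thesis using u by simp
  qed
  have gder: "(g has_vector_derivative (z * deriv f (of_real t * z))) (at t)"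
    if "0 \<le> t" "t \<le> 1" for t
  proof -
    have "(f has_field_derivative deriv f (of_real t * z)) (at (of_real t * z))"
      using hol inball[OF that] by (simp add: holomorphic_derivI)
    moreover have "((\<lambda>t. of_real t * z) has_vector_derivative z) (at t)"
      by (auto intro!: derivative_eq_intros)
    ultimately have "(f \<circ> (\<lambda>t. of_real t * z) has_vector_derivative (z * deriv f (of_real t * z))) (at t)"
      using field_vector_diff_chain_at by blast
    then show ?thesis by (simp add: g_def o_def)
  qed
  have gcont: "continuous_on {0..1} g"
  proof -
    have "continuous_on (ball 0 1) f" using hol holomorphic_on_imp_continuous_on by blast
    moreover have "continuous_on {0..1} (\<lambda>t::real. of_real t * z)" by (intro continuous_intros)
    ultimately show ?thesis unfolding g_def
      by (rule continuous_on_compose2) (use inball in auto)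
  qed
  have phider: "(\<phi> has_vector_derivative \<phi>' t) (at t)" if "0 \<le> t" "t \<le> 1" for t
  proof -
    have "(\<phi> has_real_derivative \<phi>' t) (at t)"
      unfolding \<phi>_def \<phi>'_def using pos[OF that] \<open>\<delta> > 0\<close>
      by (auto intro!: derivative_eq_intros simp: field_simps)
    then show ?thesis by (simp add: has_real_derivative_iff_has_vector_derivative)
  qed
  have phicont: "continuous_on {0..1} \<phi>"
    unfolding \<phi>_def using pos \<open>\<delta> > 0\<close> by (intro continuous_intros) (auto simp: less_imp_neq[symmetric] dest: pos)
  have bnd: "norm (z * deriv f (of_real t * z)) \<le> \<phi>' t" if "0 < t" "t < 1" for t
  proof -
    have p: "1 - t * u > 0" using pos that by auto
    have "(1 - t * u) * norm (deriv f (of_real t * z)) \<le> M"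
      using bd[of "of_real t * z"] nrm[of t] inball[of t] that by auto
    then have d: "norm (deriv f (of_real t * z)) \<le> M / (1 - t * u)"
      using p by (simp add: field_simps)
    have "M / (1 - t * u) = M * (1 - t * u) powr (-1)"
      using p by (simp add: powr_neg_one)
    also have "\<dots> \<le> M * ((1 - t * u) powr (-\<delta>) * (1 - t * u) powr (-1))"
      using powr_neg_ge1[of "1 - t * u" \<delta>] p u that \<open>M \<ge> 0\<close> \<open>\<delta> > 0\<close>
      by (intro mult_left_mono) (auto simp: mult_le_cancel_right1 mult_nonneg_nonneg intro!: divide_right_mono)
    also have "\<dots> = M * (1 - t * u) powr (-\<delta> - 1)"
      using p by (simp add: powr_add[symmetric] del: powr_neg_one powr_neg_one')
    finally have d2: "norm (deriv f (of_real t * z)) \<le> M * (1 - t * u) powr (-\<delta> - 1)"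
      using d by linarith
    have "norm (z * deriv f (of_real t * z)) = u * norm (deriv f (of_real t * z))"
      by (simp add: norm_mult u_def)
    also have "\<dots> \<le> u * (M * (1 - t * u) powr (-\<delta> - 1))"
      using d2 u by (intro mult_left_mono) auto
    finally show ?thesis by (simp add: \<phi>'_def mult_ac)
  qed
  have "norm (g 1 - g 0) \<le> \<phi> 1 - \<phi> 0"
    by (rule differentiable_bound_general[OF zero_less_one gcont phicont, of "\<lambda>t. z * deriv f (of_real t * z)" \<phi>'])
       (use gder phider bnd in auto)
  also have "\<dots> \<le> (M / \<delta>) * (1 - u) powr (-\<delta>)"
    using \<open>M \<ge> 0\<close> \<open>\<delta> > 0\<close> by (simp add: \<phi>_def)
  finally have "norm (f z - f 0) \<le> (M / \<delta>) * (1 - u) powr (-\<delta>)" by (simp add: g_def)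
  moreover have "1 \<le> (1 - u) powr (-\<delta>)"
    using u \<open>\<delta> > 0\<close> by (intro powr_neg_ge1) auto
  moreover have "norm (f 0) \<le> norm (f 0) * (1 - u) powr (-\<delta>)"
    using calculation(2) by (simp add: mult_le_cancel_left1)
  moreover have "norm (f z) \<le> norm (f 0) + norm (f z - f 0)"
    by (metis add.commute diff_add_cancel norm_triangle_ineq)
  ultimately show ?thesis unfolding u_def by (simp add: distrib_right)
qed

lemma emeasure_ball_complex:
  "r \<ge> 0 \<Longrightarrow> emeasure lborel (ball (0::complex) r) = ennreal (pi * r^2)"
  by (simp add: emeasure_ball unit_ball_vol_2)

lemma annulus_measure:
  "emeasure lborel (ball (0::complex) (1 - (1/2)^(Suc n)) - ball 0 (1 - (1/2)^n))
     \<le> ennreal (pi * (1/2)^n)"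
proof -
  define r1 where "r1 = 1 - (1/2::real)^n"
  define r2 where "r2 = 1 - (1/2::real)^(Suc n)"
  have r1: "0 \<le> r1" unfolding r1_def by (simp add: power_le_one)
  have r12: "r1 \<le> r2" unfolding r1_def r2_def by simp
  have r2: "r2 \<le> 1" unfolding r2_def by simp
  have "emeasure lborel (ball (0::complex) r2 - ball 0 r1)
        = emeasure lborel (ball (0::complex) r2) - emeasure lborel (ball (0::complex) r1)"
    by (rule emeasure_Diff) (use r1 r12 in \<open>auto simp: emeasure_ball_complex\<close>)
  also have "\<dots> = ennreal (pi * r2^2 - pi * r1^2)"
    using r1 r12 by (simp add: emeasure_ball_complex ennreal_minus)
  also have "pi * r2^2 - pi * r1^2 = pi * ((r2 - r1) * (r2 + r1))"
    by (simp add: power2_eq_square algebra_simps)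
  also have "\<dots> \<le> pi * ((1/2)^(Suc n) * 2)"
    using r1 r12 r2 by (intro mult_left_mono mult_mono) (auto simp: r1_def r2_def)
  also have "\<dots> = pi * (1/2)^n" by simp
  finally show ?thesis unfolding r1_def r2_def by (simp add: ennreal_leI)
qed

lemma integrable_radial:
  fixes \<beta> :: real
  assumes "0 \<le> \<beta>" "\<beta> < 1"
  shows "(\<integral>\<^sup>+ z. ennreal ((1 - norm z) powr (-\<beta>)) * indicator (ball (0::complex) 1) z \<partial>lborel) < \<infinity>"
proof -
  define A where "A = (\<lambda>n. ball (0::complex) (1 - (1/2)^(Suc n)) - ball 0 (1 - (1/2)^n))"
  define c where "c = (\<lambda>n::nat. 2 powr \<beta> * (2 powr \<beta>) ^ n)"
  have pt: "ennreal ((1 - norm z) powr (-\<beta>)) * indicator (ball (0::complex) 1) z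
          \<le> (\<Sum>n. ennreal (c n) * indicator (A n) z)" for z
  proof (cases "norm z < 1")
    case False then show ?thesis by simp
  next
    case True
    define x where "x = 1 / (1 - norm z)"
    have x1: "x \<ge> 1" using True by (simp add: x_def)
    define n where "n = nat \<lfloor>log 2 x\<rfloor>"
    have lg: "log 2 x \<ge> 0" using x1 by simp
    have nle: "real n \<le> log 2 x" "log 2 x < real n + 1"
      using lg by (auto simp: n_def)
    have "2 powr (real n) \<le> x" using nle(1) x1
      by (metis le_log_iff less_le_trans zero_less_one one_less_numeral_iff semiring_norm(76))
    then have xa: "2 ^ n \<le> x" by (simp add: powr_realpow)
    have "x < 2 powr (real n + 1)" using nle(2) x1
      by (metis log_less_iff less_le_trans zero_less_one one_less_numeral_iff semiring_norm(76))
    moreover have "2 powr (real n + 1) = 2 ^ Suc n"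
      by (metis of_nat_Suc add.commute powr_realpow zero_less_numeral)
    ultimately have xb: "x < 2 ^ Suc n" by simp
    have p: "1 - norm z > 0" using True by simp
    have d1: "1 - norm z \<le> (1/2)^n"
      using xa p by (simp add: x_def field_simps power_divide)
    have d2: "(1/2)^(Suc n) < 1 - norm z"
      using xb p by (simp add: x_def field_simps power_divide)
    have zA: "z \<in> A n" using d1 d2 True by (auto simp: A_def)
    have "(1 - norm z) powr (-\<beta>) \<le> ((1/2)^(Suc n)) powr (-\<beta>)"
      using d2 assms by (intro powr_mono2') auto
    also have "\<dots> = c n"
    proof -
      have "((1/2::real)^(Suc n)) powr (-\<beta>) = (2 ^ Suc n) powr \<beta>"
        by (simp add: powr_minus_divide power_one_over powr_divide)
      also have "\<dots> = (2 powr real (Suc n)) powr \<beta>"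
        by (subst powr_realpow) auto
      also have "\<dots> = (2 powr \<beta>) powr real (Suc n)"
        by (simp add: powr_powr mult.commute)
      also have "\<dots> = (2 powr \<beta>) ^ Suc n"
        by (subst powr_realpow) auto
      finally show ?thesis by (simp add: c_def)
    qed
    finally have "ennreal ((1 - norm z) powr (-\<beta>)) * indicator (ball (0::complex) 1) z
        \<le> ennreal (c n) * indicator (A n) z" using True zA by (simp add: ennreal_leI)
    also have "\<dots> \<le> (\<Sum>n. ennreal (c n) * indicator (A n) z)"
    proof -
      have "(\<Sum>j\<in>{n}. ennreal (c j) * indicator (A j) z) \<le> (\<Sum>j. ennreal (c j) * indicator (A j) z)"
        by (rule sum_le_suminf) auto
      then show ?thesis by (simp only: sum.insert finite.emptyI empty_iff sum.empty add_0_right simp_thms)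
    qed
    finally show ?thesis .
  qed
  have "(\<integral>\<^sup>+ z. ennreal ((1 - norm z) powr (-\<beta>)) * indicator (ball (0::complex) 1) z \<partial>lborel)
      \<le> (\<integral>\<^sup>+ z. (\<Sum>n. ennreal (c n) * indicator (A n) z) \<partial>lborel)"
    by (intro nn_integral_mono pt)
  also have "\<dots> = (\<Sum>n. \<integral>\<^sup>+ z. ennreal (c n) * indicator (A n) z \<partial>lborel)"
  proof (rule nn_integral_suminf)
    fix n
    have [measurable]: "A n \<in> sets lborel" by (auto simp: A_def)
    show "(\<lambda>z. ennreal (c n) * indicator (A n) z) \<in> borel_measurable lborel" by measurable
  qed
  also have "\<dots> = (\<Sum>n. ennreal (c n) * emeasure lborel (A n))"
    by (subst nn_integral_cmult_indicator) (auto simp: A_def)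
  also have "\<dots> \<le> (\<Sum>n. ennreal (c n * (pi * (1/2)^n)))"
  proof (rule suminf_le)
    fix n
    have "ennreal (c n) * emeasure lborel (A n) \<le> ennreal (c n) * ennreal (pi * (1/2)^n)"
      unfolding A_def by (rule mult_left_mono[OF annulus_measure]) simp
    also have "\<dots> = ennreal (c n * (pi * (1/2)^n))"
      by (rule ennreal_mult''[symmetric]) (simp add: c_def)
    finally show "ennreal (c n) * emeasure lborel (A n) \<le> ennreal (c n * (pi * (1/2)^n))" .
  qed auto
  also have "\<dots> = ennreal (\<Sum>n. c n * (pi * (1/2)^n))"
  proof (rule suminf_ennreal2)
    show "summable (\<lambda>n. c n * (pi * (1/2)^n))"
    proof -
      have "2 powr \<beta> < 2 powr (1::real)" using assms by (intro powr_less_mono) auto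
      then have q: "2 powr \<beta> / 2 < 1" by simp
      have sm: "summable (\<lambda>n. (2 powr \<beta> * pi) * (2 powr \<beta> / 2) ^ n)"
        using q by (intro summable_mult summable_geometric) simp
      have eq: "(\<lambda>n. c n * (pi * (1/2)^n)) = (\<lambda>n. (2 powr \<beta> * pi) * (2 powr \<beta> / 2) ^ n)"
        by (rule ext) (simp add: c_def power_divide)
      show ?thesis unfolding eq by (rule sm)
    qed
  qed (auto simp: c_def)
  also have "\<dots> < \<infinity>" by simp
  finally show ?thesis .
qed

lemma weight_bound:
  fixes r \<alpha> :: real
  assumes "0 \<le> r" "r < 1"
  shows "(1 - r^2) powr \<alpha> \<le> (1 - r) powr (- max 0 (-\<alpha>))"
proof (cases "\<alpha> \<ge> 0")
  case True
  have "(1 - r^2) powr \<alpha> \<le> 1"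
  proof (rule powr_le1)
    have "r^2 \<le> 1" using assms by (simp add: power_le_one)
    then show "\<bar>1 - r^2\<bar> \<le> 1" by simp
  qed (use True in auto)
  then show ?thesis using True assms by simp
next
  case False
  have f: "1 - r^2 = (1 - r) * (1 + r)" by (simp add: power2_eq_square algebra_simps)
  have "(1 - r^2) powr \<alpha> = (1 - r) powr \<alpha> * (1 + r) powr \<alpha>"
    unfolding f using assms by (simp add: powr_mult)
  also have "\<dots> \<le> (1 - r) powr \<alpha> * 1"
  proof (intro mult_left_mono)
    have "(1 + r) powr \<alpha> \<le> 1 powr \<alpha>" using False assms by (intro powr_mono2') auto
    then show "(1 + r) powr \<alpha> \<le> 1" by simp
  qed simp
  finally show ?thesis using False by simp
qed

lemma ereal_sup_top:
  assumes "\<And>B::real. \<exists>y\<in>S. ereal B \<le> y"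
  shows "Sup S = (\<infinity>::ereal)"
proof (rule ereal_top)
  fix B :: real
  obtain y where "y \<in> S" "ereal B \<le> y" using assms by blast
  then show "ereal B \<le> Sup S" using Sup_upper order_trans by blast
qed

lemma in_bergman:
  assumes hol: "f holomorphic_on ball 0 1"
    and bd: "\<And>z. norm z < 1 \<Longrightarrow> (1 - norm z) * norm (deriv f z) \<le> M"
    and "M \<ge> 0" and p: "p > 0" and \<alpha>: "\<alpha> > -1"
  shows "f \<in> bergman_space p \<alpha>"
proof -
  define a where "a = max 0 (-\<alpha>)"
  have a: "0 \<le> a" "a < 1" using \<alpha> by (auto simp: a_def)
  define \<gamma> where "\<gamma> = (1 - a) / 2"
  define \<beta> where "\<beta> = (1 + a) / 2"
  define \<delta> where "\<delta> = \<gamma> / p"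
  have \<gamma>: "\<gamma> > 0" using a by (simp add: \<gamma>_def)
  have \<delta>: "\<delta> > 0" using \<gamma> p by (simp add: \<delta>_def)
  have \<beta>: "0 \<le> \<beta>" "\<beta> < 1" using a by (auto simp: \<beta>_def)
  define K where "K = norm (f 0) + M / \<delta>"
  have K: "K \<ge> 0" using \<delta> \<open>M \<ge> 0\<close> by (simp add: K_def)
  have pt: "cmod (f z) powr p * (1 - cmod z ^ 2) powr \<alpha> \<le> K powr p * (1 - norm z) powr (-\<beta>)"
    if z: "norm z < 1" for z
  proof -
    define P where "P = (1 - norm z) powr (-\<delta>)"
    have P: "P \<ge> 0" by (simp add: P_def)
    have pos: "1 - norm z > 0" using z by simp
    have "norm (f z) \<le> K * P"
      unfolding K_def P_def by (rule growth[OF hol bd \<open>M \<ge> 0\<close> \<delta> z])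
    then have "norm (f z) powr p \<le> (K * P) powr p"
      using p by (intro powr_mono2) auto
    also have "\<dots> = K powr p * P powr p" using K P by (simp add: powr_mult)
    also have "P powr p = (1 - norm z) powr (-\<gamma>)"
      unfolding P_def using p by (simp add: powr_powr \<delta>_def)
    finally have A: "norm (f z) powr p \<le> K powr p * (1 - norm z) powr (-\<gamma>)" .
    have B: "(1 - cmod z ^ 2) powr \<alpha> \<le> (1 - norm z) powr (-a)"
      unfolding a_def using z by (intro weight_bound) auto
    have "cmod (f z) powr p * (1 - cmod z ^ 2) powr \<alpha>
        \<le> (K powr p * (1 - norm z) powr (-\<gamma>)) * (1 - norm z) powr (-a)"
      using A B by (intro mult_mono) auto
    also have "\<dots> = K powr p * (1 - norm z) powr (-\<beta>)"
    proof -
      have e0: "-\<beta> = -\<gamma> + -a" by (simp add: \<gamma>_def \<beta>_def field_simps)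
      have e: "(1 - norm z) powr (-\<gamma>) * (1 - norm z) powr (-a) = (1 - norm z) powr (-\<beta>)"
        unfolding e0 by (rule powr_add[symmetric])
      show ?thesis using e by (simp add: mult.assoc)
    qed
    finally show ?thesis .
  qed
  have "(\<integral>\<^sup>+ z\<in>ball 0 1. ennreal (cmod (f z) powr p * (1 - cmod z ^ 2) powr \<alpha>) \<partial>lborel)
      \<le> (\<integral>\<^sup>+ z. ennreal (K powr p) * (ennreal ((1 - norm z) powr (-\<beta>)) * indicator (ball (0::complex) 1) z) \<partial>lborel)"
  proof (intro nn_integral_mono)
    fix z :: complex
    show "ennreal (cmod (f z) powr p * (1 - cmod z ^ 2) powr \<alpha>) * indicator (ball 0 1) z
        \<le> ennreal (K powr p) * (ennreal ((1 - norm z) powr (-\<beta>)) * indicator (ball (0::complex) 1) z)"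
    proof (cases "norm z < 1")
      case True
      then show ?thesis using pt[OF True]
        by (simp add: ennreal_mult''[symmetric] ennreal_leI)
    qed simp
  qed
  also have "\<dots> = ennreal (K powr p) * (\<integral>\<^sup>+ z. ennreal ((1 - norm z) powr (-\<beta>)) * indicator (ball (0::complex) 1) z \<partial>lborel)"
  proof (rule nn_integral_cmult)
    have [measurable]: "ball (0::complex) 1 \<in> sets lborel" by simp
    show "(\<lambda>z. ennreal ((1 - norm z) powr (-\<beta>)) * indicator (ball (0::complex) 1) z) \<in> borel_measurable lborel"
      by measurable
  qed
  also have "\<dots> < \<infinity>"
    using integrable_radial[OF \<beta>] by (simp add: ennreal_mult_less_top)
  finally show ?thesis using hol unfolding bergman_space_def by simp
qed

theorem corollary2p17:
  assumes "bloch_domain D"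
  shows "b_dom D = \<infinity> \<and> (\<forall>\<alpha>>-1. b_alpha_dom \<alpha> D = \<infinity>)"
proof -
  obtain R where R: "R > 0" "\<And>z r. z \<in> D \<Longrightarrow> r > 0 \<Longrightarrow> ball z r \<subseteq> D \<Longrightarrow> r \<le> R"
    using bloch_bound[OF assms] by blast
  have berg: "f \<in> bergman_space p \<alpha>" if f: "f \<in> maps_into D" "p > 0" "\<alpha> > -1" for f p \<alpha>
  proof -
    have hol: "f holomorphic_on ball 0 1" and img: "f ` ball 0 1 \<subseteq> D"
      using f by (auto simp: maps_into_def)
    show ?thesis
      by (rule in_bergman[OF hol deriv_bound[OF hol img R(2) R(1)] _ f(2,3)]) (use R in auto)
  qed
  have bf: "b_fun f = \<infinity>" if f: "f \<in> maps_into D" for f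
    unfolding b_fun_def
  proof (rule ereal_sup_top)
    fix B :: real
    have "ereal ((2 * (\<bar>B\<bar> + 1)) / (0 + 2)) \<in> {ereal (p / (\<alpha> + 2)) | p \<alpha>. p > 0 \<and> \<alpha> > -1 \<and> f \<in> bergman_space p \<alpha>}"
      using berg[OF f, of "2 * (\<bar>B\<bar> + 1)" 0] by (intro CollectI exI[of _ "2 * (\<bar>B\<bar> + 1)"] exI[of _ 0]) auto
    moreover have "ereal B \<le> ereal ((2 * (\<bar>B\<bar> + 1)) / (0 + 2))" by simp
    ultimately show "\<exists>y\<in>{0} \<union> {ereal (p / (\<alpha> + 2)) | p \<alpha>. p > 0 \<and> \<alpha> > -1 \<and> f \<in> bergman_space p \<alpha>}. ereal B \<le> y"
      by blast
  qed
  have ba: "b_alpha \<alpha> f = \<infinity>" if f: "f \<in> maps_into D" and \<alpha>: "\<alpha> > -1" for f \<alpha>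
    unfolding b_alpha_def
  proof (rule ereal_sup_top)
    fix B :: real
    have "ereal (\<bar>B\<bar> + 1) \<in> {ereal p | p. p > 0 \<and> f \<in> bergman_space p \<alpha>}"
      using berg[OF f, of "\<bar>B\<bar> + 1" \<alpha>] \<alpha> by auto
    moreover have "ereal B \<le> ereal (\<bar>B\<bar> + 1)" by simp
    ultimately show "\<exists>y\<in>{0} \<union> {ereal p | p. p > 0 \<and> f \<in> bergman_space p \<alpha>}. ereal B \<le> y"
      by blast
  qed
  have inf: "(INF x\<in>S. (\<infinity>::ereal)) = \<infinity>" for S :: "(complex \<Rightarrow> complex) set"
    by (metis INF_top_conv(2) top_ereal_def)
  show ?thesis
    unfolding b_dom_def b_alpha_dom_def using bf ba inf by simp
qed

end
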